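(* Let $k\ge1$, $m_1,\dots,m_k\ge1$ integers with at least one $m_i\neq1$, and $\varepsilon_1,\dots,\varepsilon_k\in\{-1,1\}$. Then $\mathcal S(\underbrace{0,\dots,0}_{m_1-1},\varepsilon_1,\underbrace{0,\dots,0}_{m_2-1},\varepsilon_2,\dots,\underbrace{0,\dots,0}_{m_k-1},\varepsilon_k,1)=0.$
   Context: Let $V=\mathbb Q^\times\otimes_{\mathbb Z}\mathbb Q$ (torsion, in particular $-1$, becomes $0$); for $f\in\mathbb Q^\times$ write $f$ for its image in $V$. Tensors in $V^{\otimes n}$ are multilinear in the multiplicative sense, and any formal tensor having the number $0$ as a factor is interpreted as $0$. Define $\mu(x,y)=1-y/x$ if $x\ne0$, $\mu(0,y)=y$. For a tuple $(a_1,\dots,a_m)$, $m\ge2$ (the decorated polygon $P(a_1,\dots,a_m)$ with root decoration $a_m$, attached to $G(a_{m-1},\dots,a_1;a_m)$), define $\mathcal S(a_1,\dots,a_m)\in V^{\otimes(m-1)}$ by $\mathcal S(a_1,a_2)=\mu(a_1,a_2)$ and, for $m\ge3$, $\mathcal S(a_1,\dots,a_m)=\sum_{i=1}^{m-1}\mathcal S(a_1,\dots,\widehat{a_i},\dots,a_m)\otimes\mu(a_i,a_{i+1})-\sum_{i=2}^{m-1}\mathcal S(a_1,\dots,\widehat{a_i},\dots,a_m)\otimes\mu(a_i,a_{i-1})$. *)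

theory Defs
  imports "HOL-Computational_Algebra.Computational_Algebra"
begin

definition mu :: "rat \<Rightarrow> rat \<Rightarrow> rat" where
  "mu x y = (if x = 0 then y else 1 - y / x)"

definition del_nth :: "nat \<Rightarrow> 'a list \<Rightarrow> 'a list" where
  "del_nth i xs = take i xs @ drop (Suc i) xs"

text \<open>Formal tensors: S(a_1,...,a_m) as a formal integer linear combination of formal
  tensors f_1 (x) ... (x) f_(m-1), each given as a list of rationals.\<close>
function Sf :: "rat list \<Rightarrow> (int \<times> rat list) list" where
  "Sf as =
    (if length as < 2 then []
     else if length as = 2 then [(1, [mu (as ! 0) (as ! 1)])]
     else concat (map (\<lambda>i. map (\<lambda>(c, fs). (c, fs @ [mu (as ! i) (as ! (i + 1))]))
                                 (Sf (del_nth i as)))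
                      [0..<length as - 1])
        @ concat (map (\<lambda>i. map (\<lambda>(c, fs). (- c, fs @ [mu (as ! i) (as ! (i - 1))]))
                                 (Sf (del_nth i as)))
                      [1..<length as - 1]))"
  by pat_completeness auto
termination
  by (relation "measure length") (auto simp: del_nth_def)

text \<open>Concrete model of V = Q^* (x)_Z Q: the image of f in V is determined by its
  p-adic valuations (torsion, i.e. signs, is killed), and V has Q-basis indexed by primes.
  Hence V^(x)n is identified with finitely supported functions on n-tuples of primes.\<close>
definition qval :: "nat \<Rightarrow> rat \<Rightarrow> int" where
  "qval p x = (case quotient_of x of (a, b) \<Rightarrow>
                 int (multiplicity (int p) a) - int (multiplicity (int p) b))"

text \<open>Coordinate of the formal tensor f_1 (x) ... (x) f_n at the basis element
  e_(p_1) (x) ... (x) e_(p_n); a formal tensor with a factor 0 is 0.\<close>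
definition etens :: "rat list \<Rightarrow> nat list \<Rightarrow> rat" where
  "etens fs ps = (if length ps = length fs \<and> (\<forall>p\<in>set ps. prime p) \<and> (\<forall>f\<in>set fs. f \<noteq> 0)
                  then prod_list (map2 (\<lambda>p f. of_int (qval p f)) ps fs) else 0)"

definition tval :: "(int \<times> rat list) list \<Rightarrow> nat list \<Rightarrow> rat" where
  "tval ts ps = sum_list (map (\<lambda>(c, fs). of_int c * etens fs ps) ts)"

end

theory Submission
  imports Defs
begin

declare Sf.simps[simp del]

lemma qval_one: "qval p 1 = 0" by (simp add: qval_def)
lemma qval_mone: "qval p (-1) = 0" by (simp add: qval_def multiplicity_unit_right)

lemma etens_bad:
  assumes "f \<in> set fs" "f \<in> {0,1,-1}"
  shows "etens fs ps = 0"
proof (cases "length ps = length fs \<and> (\<forall>p\<in>set ps. prime p) \<and> (\<forall>f\<in>set fs. f \<noteq> 0)")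
  case True
  then have f0: "f \<noteq> 0" using assms by auto
  then have qv: "\<And>p. qval p f = 0" using assms qval_one qval_mone by auto
  obtain j where j: "j < length fs" "fs ! j = f" using assms(1) by (auto simp: in_set_conv_nth)
  have "(ps ! j, fs ! j) \<in> set (zip ps fs)" using j True by (auto simp: set_zip)
  then have "0 \<in> set (map2 (\<lambda>p f. of_int (qval p f) :: rat) ps fs)"
    using j qv by force
  then show ?thesis using True by (simp add: etens_def prod_list_zero_iff)
next
  case False
  then show ?thesis unfolding etens_def by (rule if_not_P)
qed

lemma del_nth_mem:
  assumes "x \<in> set as" "as ! i \<noteq> x" "i < length as"
  shows "x \<in> set (del_nth i as)"
proof -
  have "as = take i as @ as ! i # drop (Suc i) as" using assms(3) by (simp add: id_take_nth_drop)
  then have "set as = set (take i as) \<union> {as ! i} \<union> set (drop (Suc i) as)"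
    by (metis Un_insert_right insert_is_Un set_append set_simps(2) sup_commute)
  then show ?thesis using assms by (auto simp: del_nth_def)
qed

lemma del_nth_sub: "set (del_nth i as) \<subseteq> set as"
  unfolding del_nth_def using set_take_subset set_drop_subset by fastforce

lemma Sf_cases:
  assumes "(c, fs) \<in> set (concat (map (\<lambda>i. map (\<lambda>(c, fs). (c, fs @ [mu (as ! i) (as ! (i + 1))]))
                                 (Sf (del_nth i as))) [0..<length as - 1])
        @ concat (map (\<lambda>i. map (\<lambda>(c, fs). (- c, fs @ [mu (as ! i) (as ! (i - 1))]))
                                 (Sf (del_nth i as))) [1..<length as - 1]))"
  obtains (A) i c' fs' where "i < length as - 1" "(c',fs') \<in> set (Sf (del_nth i as))" "fs = fs' @ [mu (as ! i) (as ! (i + 1))]"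
  | (B) i c' fs' where "1 \<le> i" "i < length as - 1" "(c',fs') \<in> set (Sf (del_nth i as))" "fs = fs' @ [mu (as ! i) (as ! (i - 1))]"
  using assms unfolding set_append set_concat set_map by fastforce

lemma Sf_bad:
  "set as \<subseteq> {0,1,-1} \<Longrightarrow> 0 \<in> set as \<Longrightarrow> (c, fs) \<in> set (Sf as) \<Longrightarrow> \<exists>f\<in>set fs. f \<in> {0,1,-1}"
proof (induction as arbitrary: c fs rule: Sf.induct)
  case (1 as)
  have sub: "\<And>i. set (del_nth i as) \<subseteq> {0,1,-1}" by (rule order_trans[OF del_nth_sub 1(3)])
  have mem: "\<And>k. k < length as \<Longrightarrow> as ! k \<in> {0,1,-1}" using 1(3) nth_mem by blast
  show ?case
  proof (cases "length as < 2")
    case True then show ?thesis using 1(5) by (subst (asm) Sf.simps) simp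
  next
    case F1: False
    show ?thesis
    proof (cases "length as = 2")
      case True
      then obtain a b where ab: "as = [a,b]"
        by (metis (no_types, lifting) One_nat_def Suc_1 length_0_conv length_Suc_conv)
      then have "fs = [mu a b]" using 1(5) True by (subst (asm) Sf.simps) simp
      moreover have "mu a b \<in> {0,1,-1}" using 1(3,4) ab by (auto simp: mu_def)
      ultimately show ?thesis by simp
    next
      case F2: False
      from 1(5) F1 F2 have
        "(c, fs) \<in> set (concat (map (\<lambda>i. map (\<lambda>(c, fs). (c, fs @ [mu (as ! i) (as ! (i + 1))]))
                                 (Sf (del_nth i as))) [0..<length as - 1])
        @ concat (map (\<lambda>i. map (\<lambda>(c, fs). (- c, fs @ [mu (as ! i) (as ! (i - 1))]))
                                 (Sf (del_nth i as))) [1..<length as - 1]))"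
        by (subst (asm) Sf.simps) simp
      then show ?thesis
      proof (cases rule: Sf_cases)
        case (A i c' fs')
        show ?thesis
        proof (cases "as ! i = 0")
          case True
          then show ?thesis using A mem[of "Suc i"] by (auto simp: mu_def)
        next
          case False
          then have "0 \<in> set (del_nth i as)" using del_nth_mem[of 0 as i] A(1) \<open>0 \<in> set as\<close> by auto
          then obtain f where "f \<in> set fs'" "f \<in> {0,1,-1}"
            using "1.IH"(1)[of i c' fs'] A F1 F2 sub by auto
          then show ?thesis using A(3) by auto
        qed
      next
        case (B i c' fs')
        show ?thesis
        proof (cases "as ! i = 0")
          case True
          then show ?thesis using B mem[of "i - 1"] by (auto simp: mu_def)
        next
          case False
          then have "0 \<in> set (del_nth i as)" using del_nth_mem[of 0 as i] B(2) \<open>0 \<in> set as\<close> by auto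
          then obtain f where "f \<in> set fs'" "f \<in> {0,1,-1}"
            using "1.IH"(2)[of i c' fs'] B F1 F2 sub by auto
          then show ?thesis using B(4) by auto
        qed
      qed
    qed
  qed
qed

lemma concat_map2_sub:
  assumes "\<forall>e\<in>set es. e = 1 \<or> e = -1"
  shows "set (concat (map2 (\<lambda>m e. replicate (m - 1) (0::rat) @ [e]) ms es)) \<subseteq> {0,1,-1}"
proof
  fix x assume "x \<in> set (concat (map2 (\<lambda>m e. replicate (m - 1) (0::rat) @ [e]) ms es))"
  then obtain p where p: "p \<in> set (zip ms es)" "x \<in> set (replicate (fst p - 1) 0 @ [snd p])"
    by auto
  have "snd p \<in> set es" using p(1) by (metis prod.collapse set_zip_rightD)
  then show "x \<in> {0,1,-1}" using p(2) assms by (cases "fst p - 1 = 0") auto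
qed

lemma concat_map2_zero:
  assumes "(m, e) \<in> set (zip ms es)" "m \<ge> 2"
  shows "(0::rat) \<in> set (concat (map2 (\<lambda>m e. replicate (m - 1) (0::rat) @ [e]) ms es))"
proof -
  have "0 \<in> set (replicate (m - 1) (0::rat) @ [e])" using assms(2) by simp
  moreover have "replicate (m - 1) (0::rat) @ [e] \<in> set (map2 (\<lambda>m e. replicate (m - 1) (0::rat) @ [e]) ms es)"
    using assms(1) by force
  ultimately show ?thesis unfolding set_concat by blast
qed

lemma sum_list_zero_helper: "(\<forall>t\<in>set L. f t = 0) \<Longrightarrow> sum_list (map f L) = (0::'a::monoid_add)"
  by (induct L) auto

theorem mainTheorem7:
  fixes ms :: "nat list" and es :: "rat list"
  assumes "length ms = length es"
    and "length ms \<ge> 1"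
    and "\<forall>m\<in>set ms. m \<ge> 1"
    and "\<exists>m\<in>set ms. m \<noteq> 1"
    and "\<forall>e\<in>set es. e = 1 \<or> e = -1"
  shows "tval (Sf (concat (map2 (\<lambda>m e. replicate (m - 1) 0 @ [e]) ms es) @ [1])) = (\<lambda>_. 0)"
proof -
  let ?as = "concat (map2 (\<lambda>m e. replicate (m - 1) 0 @ [e]) ms es) @ [1]"
  have sub: "set ?as \<subseteq> {0,1,-1}"
    using concat_map2_sub[OF assms(5), of ms] by simp
  obtain m where m: "m \<in> set ms" "m \<noteq> 1" using assms(4) by blast
  then have m2: "m \<ge> 2" using assms(3) by fastforce
  obtain j where j: "j < length ms" "ms ! j = m" using m by (auto simp: in_set_conv_nth)
  have "(ms ! j, es ! j) \<in> set (zip ms es)" using j assms(1) by (auto simp: set_zip)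
  then have z: "0 \<in> set ?as" using concat_map2_zero[of m "es ! j" ms es] m2 j by simp
  show ?thesis
  proof
    fix ps
    have "\<And>t. t \<in> set (Sf ?as) \<Longrightarrow> (case t of (c, fs) \<Rightarrow> of_int c * etens fs ps) = (0::rat)"
    proof -
      fix t assume t: "t \<in> set (Sf ?as)"
      obtain c fs where cfs: "t = (c, fs)" by fastforce
      obtain f where "f \<in> set fs" "f \<in> {0,1,-1}" using Sf_bad[OF sub z, of c fs] t cfs by blast
      then have "etens fs ps = 0" by (rule etens_bad)
      then show "(case t of (c, fs) \<Rightarrow> of_int c * etens fs ps) = 0" using cfs by simp
    qed
    then show "tval (Sf ?as) ps = 0" unfolding tval_def
      by (intro sum_list_zero_helper) blast
  qed
qed

end
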